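(* Assume (H1)–(H5) and (H4)$_{st}$. Let $u\in C(\mathbb{R}^n\times[0,T))$ be a viscosity solution of (1.1)–(1.2). Let $(x,t)\in\mathbb{R}^n\times(0,T)$ be a point where $u$ is differentiable and let $(\xi,\eta,u_\xi)\in C^1([0,t];\mathbb{R}^n\times\mathbb{R}^n\times\mathbb{R})$ solve the Lie equation on $[0,t]$ with terminal condition $\xi(t)=x$, $\eta(t)=D_xu(x,t)$, $u_\xi(t)=u(x,t)$. Then: If $(C_1,K_3)\ne(0,0)$, $$|D_xu(x,t)-\eta(0)|\le\Big(\frac{C_1\beta}{C_1+K_3}+|D_xu(x,t)|\Big)(e^{(C_1+K_3)t}-1),\qquad |D_xu(x,t)-\eta(0)|\le\Big(\frac{C_1\beta}{C_1+K_3}+|\eta(0)|\Big)(e^{(C_1+K_3)t}-1),$$ and consequently $$|\eta(0)|e^{-(C_1+K_3)t}-\frac{C_1\beta}{C_1+K_3}(1-e^{-(C_1+K_3)t})\le|D_xu(x,t)|\le|\eta(0)|e^{(C_1+K_3)t}+\frac{C_1\beta}{C_1+K_3}(e^{(C_1+K_3)t}-1).$$ Moreover: if $K_3=0$, $|\eta(0)|e^{-C_1t}-\beta(1-e^{-C_1t})\le|D_xu(x,t)|\le|\eta(0)|e^{C_1t}+\beta(e^{C_1t}-1)$; if $\beta=0$, $|\eta(0)|e^{-(C_1+K_3)t}\le|D_xu(x,t)|\le|\eta(0)|e^{(C_1+K_3)t}$; if $C_1=0$, $|\eta(0)|e^{-K_3t}\le|D_xu(x,t)|\le|\eta(0)|e^{K_3t}$;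 if $(C_1,K_3)=(0,0)$, $D_xu(x,t)=\eta(0)$.
   Context: $T>0$; $H:\mathbb{R}^n\times[0,T]\times\mathbb{R}\times\mathbb{R}^n\to\mathbb{R}$ continuous; $u_0$ Lipschitz. Problem (1.1)–(1.2): $u_t+H(x,t,u,D_xu)=0$ in $\mathbb{R}^n\times(0,T)$, $u(x,0)=u_0(x)$. (H1) there exist $C_1\ge0$, $\beta\in\{0,1\}$ with $|H(x,t,u,p)-H(y,t,u,p)|\le C_1(\beta+|p|)|x-y|$. (H2) there exist $A_2,B_2\ge0$ with $|H(x,t,u,p)-H(x,t,u,q)|\le(A_2|x|+B_2)|p-q|$. (H3) there exists $K_3\ge0$ with $|H(x,t,u,p)-H(x,t,v,p)|\le K_3|u-v|$. (H4) $p\mapsto H(x,t,u,p)$ convex. (H5) $H\in C^2(\mathbb{R}^n\times[0,T]\times\mathbb{R}\times\mathbb{R}^n)$. (H4)$_{st}$ $D_{pp}H(x,t,u,p)$ is positive definite everywhere. Viscosity solution: $u\in C(\mathbb{R}^n\times[0,T))$, $u(\cdot,0)=u_0$, and for every $\phi\in C^1(\mathbb{R}^n\times(0,T))$, if $u-\phi$ has a local max (resp. min) at $(x,t)\in\mathbb{R}^n\times(0,T)$ then $\phi_t+H(x,t,u(x,t),D_x\phi(x,t))\le0$ (resp. $\ge0$). Lie equation: $\xi'(s)=D_pH(\xi(s),s,u_\xi(s),\eta(s))$, $\eta'(s)=-D_xH(\xi(s),s,u_\xi(s),\eta(s))-D_uH(\xi(s),s,u_\xi(s),\eta(s))\eta(s)$,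 $u_\xi'(s)=\langle\eta(s),\xi'(s)\rangle-H(\xi(s),s,u_\xi(s),\eta(s))$. *)

theory Defs
  imports "HOL-Analysis.Analysis"
begin

definition grad :: "('a::euclidean_space \<Rightarrow> real) \<Rightarrow> 'a \<Rightarrow> 'a" where
  "grad f x = (THE v. (f has_derivative (\<lambda>h. v \<bullet> h)) (at x))"

definition C1_on :: "('a::real_normed_vector \<Rightarrow> real) \<Rightarrow> 'a set \<Rightarrow> bool" where
  "C1_on f S \<longleftrightarrow> (\<exists>f'. (\<forall>z\<in>S. (f has_derivative blinfun_apply (f' z)) (at z within S))
                       \<and> continuous_on S f')"

definition C2_on :: "('a::real_normed_vector \<Rightarrow> real) \<Rightarrow> 'a set \<Rightarrow> bool" where
  "C2_on f S \<longleftrightarrow> (\<exists>f' f''. (\<forall>z\<in>S. (f has_derivative blinfun_apply (f' z)) (at z within S))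
                       \<and> (\<forall>z\<in>S. (f' has_derivative blinfun_apply (f'' z)) (at z within S))
                       \<and> continuous_on S f'')"

definition DxH :: "('a::euclidean_space \<Rightarrow> real \<Rightarrow> real \<Rightarrow> 'a \<Rightarrow> real) \<Rightarrow> 'a \<Rightarrow> real \<Rightarrow> real \<Rightarrow> 'a \<Rightarrow> 'a" where
  "DxH H x t u p = grad (\<lambda>y. H y t u p) x"
definition DpH :: "('a::euclidean_space \<Rightarrow> real \<Rightarrow> real \<Rightarrow> 'a \<Rightarrow> real) \<Rightarrow> 'a \<Rightarrow> real \<Rightarrow> real \<Rightarrow> 'a \<Rightarrow> 'a" where
  "DpH H x t u p = grad (\<lambda>q. H x t u q) p"
definition DuH :: "('a::euclidean_space \<Rightarrow> real \<Rightarrow> real \<Rightarrow> 'a \<Rightarrow> real) \<Rightarrow> 'a \<Rightarrow> real \<Rightarrow> real \<Rightarrow> 'a \<Rightarrow> real" where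
  "DuH H x t u p = deriv (\<lambda>v. H x t v p) u"

definition DppH_pos_def :: "('a::euclidean_space \<Rightarrow> real \<Rightarrow> real \<Rightarrow> 'a \<Rightarrow> real) \<Rightarrow> 'a \<Rightarrow> real \<Rightarrow> real \<Rightarrow> 'a \<Rightarrow> bool" where
  "DppH_pos_def H x t u p \<longleftrightarrow>
     (\<exists>L. ((\<lambda>q. DpH H x t u q) has_derivative L) (at p) \<and> (\<forall>v. v \<noteq> 0 \<longrightarrow> v \<bullet> L v > 0))"

definition viscosity_solution ::
  "('a::euclidean_space \<Rightarrow> real \<Rightarrow> real \<Rightarrow> 'a \<Rightarrow> real) \<Rightarrow> real \<Rightarrow> ('a \<Rightarrow> real) \<Rightarrow> ('a \<Rightarrow> real \<Rightarrow> real) \<Rightarrow> bool" where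
  "viscosity_solution H T u0 u \<longleftrightarrow>
     continuous_on (UNIV \<times> {0..<T}) (\<lambda>z. u (fst z) (snd z)) \<and>
     (\<forall>x. u x 0 = u0 x) \<and>
     (\<forall>\<phi> x t. C1_on (\<lambda>z. \<phi> (fst z) (snd z)) (UNIV \<times> {0<..<T}) \<and> t \<in> {0<..<T} \<longrightarrow>
        ((\<exists>e>0. \<forall>y s. s \<in> {0<..<T} \<and> dist (y, s) (x, t) < e \<longrightarrow> u y s - \<phi> y s \<le> u x t - \<phi> x t) \<longrightarrow>
            deriv (\<lambda>s. \<phi> x s) t + H x t (u x t) (grad (\<lambda>y. \<phi> y t) x) \<le> 0) \<and>
        ((\<exists>e>0. \<forall>y s. s \<in> {0<..<T} \<and> dist (y, s) (x, t) < e \<longrightarrow> u y s - \<phi> y s \<ge> u x t - \<phi> x t) \<longrightarrow>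
            deriv (\<lambda>s. \<phi> x s) t + H x t (u x t) (grad (\<lambda>y. \<phi> y t) x) \<ge> 0))"

definition lie_solution ::
  "('a::euclidean_space \<Rightarrow> real \<Rightarrow> real \<Rightarrow> 'a \<Rightarrow> real) \<Rightarrow> real \<Rightarrow> (real \<Rightarrow> 'a) \<Rightarrow> (real \<Rightarrow> 'a) \<Rightarrow> (real \<Rightarrow> real) \<Rightarrow> bool" where
  "lie_solution H t \<xi> \<eta> u\<xi> \<longleftrightarrow>
     (\<forall>s\<in>{0..t}.
        (\<xi> has_vector_derivative DpH H (\<xi> s) s (u\<xi> s) (\<eta> s)) (at s within {0..t}) \<and>
        (\<eta> has_vector_derivative
            (- DxH H (\<xi> s) s (u\<xi> s) (\<eta> s) - DuH H (\<xi> s) s (u\<xi> s) (\<eta> s) *\<^sub>R \<eta> s)) (at s within {0..t}) \<and>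
        (u\<xi> has_vector_derivative
            (\<eta> s \<bullet> DpH H (\<xi> s) s (u\<xi> s) (\<eta> s) - H (\<xi> s) s (u\<xi> s) (\<eta> s))) (at s within {0..t}))"

end

theory Submission
  imports Defs
begin


lemma grad_from_deriv:
  fixes f :: "'a::euclidean_space \<Rightarrow> real"
  assumes d: "(f has_derivative D) (at x)"
  shows "grad f x = adjoint D 1" "\<And>h. D h = adjoint D 1 \<bullet> h"
proof -
  have lin: "linear D" using d has_derivative_linear by blast
  have eq: "\<And>h. D h = adjoint D 1 \<bullet> h"
    using adjoint_works[OF lin, of _ 1] by (simp add: inner_commute)
  then show "\<And>h. D h = adjoint D 1 \<bullet> h" .
  have d2: "(f has_derivative (\<lambda>h. adjoint D 1 \<bullet> h)) (at x)"
    using d eq by (metis (no_types, lifting) ext)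
  show "grad f x = adjoint D 1"
    unfolding grad_def
  proof (rule the_equality)
    show "(f has_derivative (\<lambda>h. adjoint D 1 \<bullet> h)) (at x)" by fact
  next
    fix v assume "(f has_derivative (\<lambda>h. v \<bullet> h)) (at x)"
    then have "(\<lambda>h. v \<bullet> h) = (\<lambda>h. adjoint D 1 \<bullet> h)"
      using d2 has_derivative_unique by blast
    then have "v \<bullet> (v - adjoint D 1) = adjoint D 1 \<bullet> (v - adjoint D 1)" by metis
    then have "(v - adjoint D 1) \<bullet> (v - adjoint D 1) = 0" by (simp add: inner_diff_left)
    then show "v = adjoint D 1" by simp
  qed
qed

lemma lip_deriv_bound:
  fixes f :: "'a::real_normed_vector \<Rightarrow> real"
  assumes d: "(f has_derivative D) (at x)"
    and L: "\<And>y. \<bar>f y - f x\<bar> \<le> K * norm (y - x)"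
  shows "\<bar>D h\<bar> \<le> K * norm h"
proof -
  have lin: "linear D" using d has_derivative_linear by blast
  have e: "((\<lambda>r::real. x + r *\<^sub>R h) has_derivative (\<lambda>r. r *\<^sub>R h)) (at 0)"
    by (auto intro!: derivative_eq_intros)
  have "((\<lambda>r. f (x + r *\<^sub>R h)) has_derivative (\<lambda>r. D (r *\<^sub>R h))) (at 0)"
    using has_derivative_compose[OF e] d by simp
  moreover have "(\<lambda>r. D (r *\<^sub>R h)) = (\<lambda>r. D h * r)"
    using linear_scale[OF lin] by (auto simp: mult.commute)
  ultimately have "((\<lambda>r. f (x + r *\<^sub>R h)) has_real_derivative D h) (at 0)"
    by (simp add: has_field_derivative_def)
  then have "((\<lambda>y. (f (x + y *\<^sub>R h) - f x) / (y - 0)) \<longlongrightarrow> D h) (at 0)"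
    by (simp add: has_field_derivative_iff)
  then have lim: "((\<lambda>y. \<bar>(f (x + y *\<^sub>R h) - f x) / (y - 0)\<bar>) \<longlongrightarrow> \<bar>D h\<bar>) (at 0)"
    by (rule tendsto_rabs)
  have "\<forall>\<^sub>F y in at 0. \<bar>(f (x + y *\<^sub>R h) - f x) / (y - 0)\<bar> \<le> K * norm h"
  proof (rule eventually_at_topological[THEN iffD2], intro exI[of _ UNIV] conjI ballI impI allI, simp_all)
    fix y :: real assume "y \<noteq> 0"
    have "\<bar>f (x + y *\<^sub>R h) - f x\<bar> \<le> K * (\<bar>y\<bar> * norm h)" using L[of "x + y *\<^sub>R h"] by simp
    then show "\<bar>f (x + y *\<^sub>R h) - f x\<bar> / \<bar>y\<bar> \<le> K * norm h"
      using \<open>y \<noteq> 0\<close> by (simp add: divide_le_eq mult_ac)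
  qed
  then show ?thesis using tendsto_upperbound[OF lim] by simp
qed



lemma sqnorm_deriv:
  fixes F :: "real \<Rightarrow> 'a::real_inner"
  assumes d: "(F has_vector_derivative V) (at r)" and dp: "\<delta> > 0"
  shows "((\<lambda>r. sqrt (\<delta> + F r \<bullet> F r)) has_real_derivative (F r \<bullet> V) / sqrt (\<delta> + F r \<bullet> F r)) (at r)"
proof -
  have d': "(F has_derivative (\<lambda>y. y *\<^sub>R V)) (at r)" using d by (simp add: has_vector_derivative_def)
  have "((\<lambda>r. F r \<bullet> F r) has_derivative (\<lambda>y. F r \<bullet> (y *\<^sub>R V) + (y *\<^sub>R V) \<bullet> F r)) (at r)"
    using has_derivative_inner[OF d' d'] .
  moreover have "(\<lambda>y. F r \<bullet> (y *\<^sub>R V) + (y *\<^sub>R V) \<bullet> F r) = (\<lambda>y. (2 * (F r \<bullet> V)) * y)"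
    by (auto simp: inner_commute algebra_simps)
  ultimately have i: "((\<lambda>r. F r \<bullet> F r) has_real_derivative 2 * (F r \<bullet> V)) (at r)"
    by (simp add: has_field_derivative_def)
  have pos: "0 < \<delta> + F r \<bullet> F r" using dp by (simp add: add_pos_nonneg)
  have "((\<lambda>r. \<delta> + F r \<bullet> F r) has_real_derivative 2 * (F r \<bullet> V)) (at r)"
    using i by (auto intro!: derivative_eq_intros)
  from DERIV_chain2[OF DERIV_real_sqrt[OF pos] this]
  show ?thesis by (simp add: field_simps)
qed

lemma gronwall_aux:
  fixes F F' :: "real \<Rightarrow> 'a::real_inner"
  assumes a: "a \<ge> 0" and c: "c \<ge> 0" and s: "s \<in> {0..t}"
    and d: "\<And>r. r \<in> {0..t} \<Longrightarrow> (F has_vector_derivative F' r) (at r within {0..t})"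
    and b: "\<And>r. r \<in> {0..t} \<Longrightarrow> norm (F' r) \<le> a * (c + norm (F r))"
  shows "exp (- a * s) * (c + norm (F s)) \<le> c + norm (F 0)"
    "c + norm (F 0) \<le> exp (a * s) * (c + norm (F s))"
proof -
  have contF: "continuous_on {0..t} F" using continuous_on_vector_derivative d by blast
  have s0: "0 \<le> s" "s \<le> t" using s by auto
  have dint: "(F has_vector_derivative F' r) (at r)" if "0 < r" "r < s" for r
  proof -
    have "r \<in> interior {0..t}" using that s0 by auto
    then have "at r within {0..t} = at r" by (rule at_within_interior)
    then show ?thesis using d[of r] that s0 by auto
  qed
  define N where "N \<delta> r = sqrt (\<delta> + F r \<bullet> F r)" for \<delta> r
  have Nge: "norm (F r) \<le> N \<delta> r" if "\<delta> > 0" for \<delta> r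
    unfolding N_def using that by (metis less_eq_real_def power2_norm_eq_inner real_le_rsqrt le_add_same_cancel2 add_increasing2)
  have Nle: "N \<delta> r \<le> norm (F r) + sqrt \<delta>" if "\<delta> > 0" for \<delta> r
  proof -
    have "N \<delta> r = sqrt (\<delta> + (norm (F r))^2)" unfolding N_def by (simp add: power2_norm_eq_inner)
    also have "\<dots> \<le> sqrt \<delta> + sqrt ((norm (F r))^2)" by (rule sqrt_add_le_add_sqrt) (auto simp: less_imp_le[OF that]) 
    finally show ?thesis by simp
  qed
  have Npos: "N \<delta> r > 0" if "\<delta> > 0" for \<delta> r
    unfolding N_def using that by (simp add: add_pos_nonneg)
  have key: "\<bar>F r \<bullet> F' r\<bar> / N \<delta> r \<le> a * (c + N \<delta> r)" if "\<delta> > 0" "0 < r" "r < s" for \<delta> r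
  proof -
    have "\<bar>F r \<bullet> F' r\<bar> \<le> norm (F r) * norm (F' r)" by (rule Cauchy_Schwarz_ineq2)
    also have "\<dots> \<le> N \<delta> r * (a * (c + N \<delta> r))"
    proof (rule mult_mono)
      have "norm (F' r) \<le> a * (c + norm (F r))" using b[of r] that s0 by auto
      also have "\<dots> \<le> a * (c + N \<delta> r)" using Nge[OF that(1), of r] a by (intro mult_left_mono) auto
      finally show "norm (F' r) \<le> a * (c + N \<delta> r)" .
    qed (use Nge[OF that(1), of r] Npos[OF that(1), of r] in auto)
    finally show ?thesis using Npos[OF that(1), of r] by (simp add: divide_le_eq mult.commute)
  qed
  have contN: "continuous_on {0..s} (N \<delta>)" for \<delta>
    unfolding N_def
    using contF s0 by (auto intro!: continuous_intros intro: continuous_on_subset)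
  have A: "exp (- a * s) * (c + norm (F s)) \<le> c + norm (F 0) + sqrt \<delta>" if dp: "\<delta> > 0" for \<delta>
  proof -
    have "(\<lambda>r. exp (- a * r) * (c + N \<delta> r)) s \<le> (\<lambda>r. exp (- a * r) * (c + N \<delta> r)) 0"
    proof (rule DERIV_nonpos_imp_decreasing_open[OF s0(1)])
      fix r assume r: "0 < r" "r < s"
      have dN: "(N \<delta> has_real_derivative (F r \<bullet> F' r) / N \<delta> r) (at r)"
        unfolding N_def using sqnorm_deriv[OF dint[OF r] dp] .
      have "((\<lambda>r. exp (- a * r) * (c + N \<delta> r)) has_real_derivative
          exp (- a * r) * ((F r \<bullet> F' r) / N \<delta> r - a * (c + N \<delta> r))) (at r)"
        using dN by (auto intro!: derivative_eq_intros simp: algebra_simps)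
      moreover have "exp (- a * r) * ((F r \<bullet> F' r) / N \<delta> r - a * (c + N \<delta> r)) \<le> 0"
      proof -
        have "(F r \<bullet> F' r) / N \<delta> r \<le> \<bar>F r \<bullet> F' r\<bar> / N \<delta> r"
          using Npos[OF dp, of r] by (simp add: divide_right_mono)
        then show ?thesis using key[OF dp r] by (simp add: mult_nonpos_nonneg mult_nonneg_nonpos)
      qed
      ultimately show "\<exists>y. ((\<lambda>r. exp (- a * r) * (c + N \<delta> r)) has_real_derivative y) (at r) \<and> y \<le> 0" by blast
    next
      show "continuous_on {0..s} (\<lambda>r. exp (- a * r) * (c + N \<delta> r))"
        using contN by (auto intro!: continuous_intros)
    qed
    then have "exp (- a * s) * (c + N \<delta> s) \<le> c + N \<delta> 0" by simp
    moreover have "exp (- a * s) * (c + norm (F s)) \<le> exp (- a * s) * (c + N \<delta> s)"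
      using Nge[OF dp] by simp
    ultimately show ?thesis using Nle[OF dp, of 0] by linarith
  qed
  show "exp (- a * s) * (c + norm (F s)) \<le> c + norm (F 0)"
  proof (rule field_le_epsilon)
    fix e :: real assume "e > 0"
    then show "exp (- a * s) * (c + norm (F s)) \<le> c + norm (F 0) + e"
      using A[of "e^2"] by simp
  qed
  have B: "c + norm (F 0) \<le> exp (a * s) * (c + norm (F s)) + exp (a * s) * sqrt \<delta>" if dp: "\<delta> > 0" for \<delta>
  proof -
    have "(\<lambda>r. exp (a * r) * (c + N \<delta> r)) 0 \<le> (\<lambda>r. exp (a * r) * (c + N \<delta> r)) s"
    proof (rule DERIV_nonneg_imp_increasing_open[OF s0(1)])
      fix r assume r: "0 < r" "r < s"
      have dN: "(N \<delta> has_real_derivative (F r \<bullet> F' r) / N \<delta> r) (at r)"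
        unfolding N_def using sqnorm_deriv[OF dint[OF r] dp] .
      have "((\<lambda>r. exp (a * r) * (c + N \<delta> r)) has_real_derivative
          exp (a * r) * ((F r \<bullet> F' r) / N \<delta> r + a * (c + N \<delta> r))) (at r)"
        using dN by (auto intro!: derivative_eq_intros simp: algebra_simps)
      moreover have "exp (a * r) * ((F r \<bullet> F' r) / N \<delta> r + a * (c + N \<delta> r)) \<ge> 0"
      proof -
        have "- \<bar>F r \<bullet> F' r\<bar> / N \<delta> r \<le> (F r \<bullet> F' r) / N \<delta> r"
        proof -
          have "- \<bar>F r \<bullet> F' r\<bar> \<le> F r \<bullet> F' r" by linarith
          then have "(- \<bar>F r \<bullet> F' r\<bar>) / N \<delta> r \<le> (F r \<bullet> F' r) / N \<delta> r"
            using Npos[OF dp, of r] by (intro divide_right_mono) auto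
          then show ?thesis by simp
        qed
        then show ?thesis using key[OF dp r] by simp
      qed
      ultimately show "\<exists>y. ((\<lambda>r. exp (a * r) * (c + N \<delta> r)) has_real_derivative y) (at r) \<and> y \<ge> 0" by blast
    next
      show "continuous_on {0..s} (\<lambda>r. exp (a * r) * (c + N \<delta> r))"
        using contN by (auto intro!: continuous_intros)
    qed
    then have "c + N \<delta> 0 \<le> exp (a * s) * (c + N \<delta> s)" by simp
    moreover have "exp (a * s) * (c + N \<delta> s) \<le> exp (a * s) * (c + norm (F s) + sqrt \<delta>)"
      using Nle[OF dp, of s] by simp
    ultimately show ?thesis using Nge[OF dp, of 0] by (simp add: algebra_simps)
  qed
  show "c + norm (F 0) \<le> exp (a * s) * (c + norm (F s))"
  proof (rule field_le_epsilon)
    fix e :: real assume e: "e > 0"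
    have "exp (a * s) * sqrt ((e / exp (a * s))^2) = e" using e by simp
    then show "c + norm (F 0) \<le> exp (a * s) * (c + norm (F s)) + e"
      using B[of "(e / exp (a * s))^2"] e by simp
  qed
qed



lemma partial_bounds:
  fixes H :: "'a::euclidean_space \<Rightarrow> real \<Rightarrow> real \<Rightarrow> 'a \<Rightarrow> real"
  assumes H5: "C2_on (\<lambda>(x, t, u, p). H x t u p) (UNIV \<times> {0..T} \<times> UNIV \<times> UNIV)"
    and H1: "\<And>x y t u p. t \<in> {0..T} \<Longrightarrow> \<bar>H x t u p - H y t u p\<bar> \<le> C\<^sub>1 * (\<beta> + norm p) * norm (x - y)"
    and H3: "\<And>x t u v p. t \<in> {0..T} \<Longrightarrow> \<bar>H x t u p - H x t v p\<bar> \<le> K\<^sub>3 * \<bar>u - v\<bar>"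
    and s: "s \<in> {0..T}"
  shows "norm (DxH H x s u p) \<le> C\<^sub>1 * (\<beta> + norm p)" "\<bar>DuH H x s u p\<bar> \<le> K\<^sub>3"
proof -
  define S where "S = (UNIV :: 'a set) \<times> {0..T} \<times> (UNIV :: real set) \<times> (UNIV :: 'a set)"
  obtain f' where f': "\<And>z. z \<in> S \<Longrightarrow> ((\<lambda>(x, t, u, p). H x t u p) has_derivative blinfun_apply (f' z)) (at z within S)"
    using H5 unfolding C2_on_def S_def by blast
  have img1: "(\<lambda>y. (y, s, u, p)) ` UNIV \<subseteq> S" using s by (auto simp: S_def)
  have e1: "((\<lambda>y. (y, s, u, p)) has_derivative (\<lambda>h. (h, 0, 0, 0))) (at x within UNIV)"
    by (auto intro!: derivative_eq_intros simp: zero_prod_def)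
  have dx: "((\<lambda>y. H y s u p) has_derivative (\<lambda>h. f' (x, s, u, p) (h, 0, 0, 0))) (at x)"
    using has_derivative_in_compose2[OF f' img1 _ e1] by simp
  define D where "D = (\<lambda>h. f' (x, s, u, p) (h, 0, 0, 0))"
  have dx': "((\<lambda>y. H y s u p) has_derivative D) (at x)" using dx D_def by simp
  have bd: "\<bar>D h\<bar> \<le> C\<^sub>1 * (\<beta> + norm p) * norm h" for h
    by (rule lip_deriv_bound[OF dx']) (use H1[OF s] in auto)
  have g: "DxH H x s u p = adjoint D 1" unfolding DxH_def using grad_from_deriv(1)[OF dx'] .
  have "D (adjoint D 1) = adjoint D 1 \<bullet> adjoint D 1" using grad_from_deriv(2)[OF dx'] .
  then have sq: "norm (adjoint D 1) ^ 2 \<le> C\<^sub>1 * (\<beta> + norm p) * norm (adjoint D 1)"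
    using bd[of "adjoint D 1"] by (simp add: power2_norm_eq_inner)
  have nn: "0 \<le> C\<^sub>1 * (\<beta> + norm p)"
  proof -
    obtain b :: 'a where b: "b \<in> Basis" using nonempty_Basis by blast
    then show ?thesis using bd[of b] by (simp add: norm_Basis)
  qed
  show "norm (DxH H x s u p) \<le> C\<^sub>1 * (\<beta> + norm p)"
  proof (cases "norm (adjoint D 1) = 0")
    case False
    then have pos: "norm (adjoint D 1) > 0" by simp
    have "norm (adjoint D 1) * norm (adjoint D 1) \<le> C\<^sub>1 * (\<beta> + norm p) * norm (adjoint D 1)"
      using sq by (simp only: power2_eq_square)
    then have "norm (adjoint D 1) \<le> C\<^sub>1 * (\<beta> + norm p)"
      using pos by (rule mult_right_le_imp_le)
    then show ?thesis by (simp only: g)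
  qed (use nn g in auto)
  have img2: "(\<lambda>v. (x, s, v, p)) ` UNIV \<subseteq> S" using s by (auto simp: S_def)
  have e2: "((\<lambda>v. (x, s, v, p)) has_derivative (\<lambda>h. (0, 0, h, 0))) (at u within UNIV)"
    by (auto intro!: derivative_eq_intros simp: zero_prod_def)
  have du: "((\<lambda>v. H x s v p) has_derivative (\<lambda>h. f' (x, s, u, p) (0, 0, h, 0))) (at u)"
    using has_derivative_in_compose2[OF f' img2 _ e2] by simp
  define E where "E = (\<lambda>h. f' (x, s, u, p) (0, 0, h, 0))"
  have du': "((\<lambda>v. H x s v p) has_derivative E) (at u)" using du E_def by simp
  have lin: "linear E" using du' has_derivative_linear by blast
  have Eh: "E h = h * E 1" for h
    using linear_scale[OF lin, of h 1] by simp
  have "E = (*) (E 1)"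
  proof
    fix h show "E h = E 1 * h" using Eh[of h] by (simp only: mult.commute)
  qed
  then have "((\<lambda>v. H x s v p) has_real_derivative E 1) (at u)"
    using du' by (simp only: has_field_derivative_def)
  then have "DuH H x s u p = E 1" unfolding DuH_def by (rule DERIV_imp_deriv)
  moreover have "\<bar>E 1\<bar> \<le> K\<^sub>3 * norm (1::real)"
    by (rule lip_deriv_bound[OF du']) (use H3[OF s] in \<open>auto simp: abs_minus_commute\<close>)
  ultimately show "\<bar>DuH H x s u p\<bar> \<le> K\<^sub>3" by simp
qed



theorem proposition4p1:
  fixes H :: "'a::euclidean_space \<Rightarrow> real \<Rightarrow> real \<Rightarrow> 'a \<Rightarrow> real"
    and T C\<^sub>1 \<beta> K\<^sub>3 :: real
    and u0 :: "'a \<Rightarrow> real" and u :: "'a \<Rightarrow> real \<Rightarrow> real"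
    and x :: 'a and t :: real
    and \<xi> \<eta> :: "real \<Rightarrow> 'a" and u\<xi> :: "real \<Rightarrow> real"
  assumes T_pos: "T > 0"
    and H_cont: "continuous_on (UNIV \<times> {0..T} \<times> UNIV \<times> UNIV) (\<lambda>(x, t, u, p). H x t u p)"
    and u0_lip: "\<exists>L. L-lipschitz_on UNIV u0"
    and H1: "C\<^sub>1 \<ge> 0" "\<beta> \<in> {0, 1}"
      "\<And>x y t u p. t \<in> {0..T} \<Longrightarrow> \<bar>H x t u p - H y t u p\<bar> \<le> C\<^sub>1 * (\<beta> + norm p) * norm (x - y)"
    and H2: "\<exists>A\<^sub>2 B\<^sub>2. A\<^sub>2 \<ge> 0 \<and> B\<^sub>2 \<ge> 0 \<and> (\<forall>x t u p q. t \<in> {0..T} \<longrightarrow>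
              \<bar>H x t u p - H x t u q\<bar> \<le> (A\<^sub>2 * norm x + B\<^sub>2) * norm (p - q))"
    and H3: "K\<^sub>3 \<ge> 0"
      "\<And>x t u v p. t \<in> {0..T} \<Longrightarrow> \<bar>H x t u p - H x t v p\<bar> \<le> K\<^sub>3 * \<bar>u - v\<bar>"
    and H4: "\<And>x t u. t \<in> {0..T} \<Longrightarrow> convex_on UNIV (\<lambda>p. H x t u p)"
    and H5: "C2_on (\<lambda>(x, t, u, p). H x t u p) (UNIV \<times> {0..T} \<times> UNIV \<times> UNIV)"
    and H4st: "\<And>x t u p. t \<in> {0..T} \<Longrightarrow> DppH_pos_def H x t u p"
    and visc: "viscosity_solution H T u0 u"
    and t_in: "t \<in> {0<..<T}"
    and u_diff: "(\<lambda>z. u (fst z) (snd z)) differentiable (at (x, t))"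
    and lie: "lie_solution H t \<xi> \<eta> u\<xi>"
    and term_xi: "\<xi> t = x"
    and term_eta: "\<eta> t = grad (\<lambda>y. u y t) x"
    and term_u: "u\<xi> t = u x t"
  shows
    "((C\<^sub>1, K\<^sub>3) \<noteq> (0, 0) \<longrightarrow>
        norm (grad (\<lambda>y. u y t) x - \<eta> 0)
          \<le> (C\<^sub>1 * \<beta> / (C\<^sub>1 + K\<^sub>3) + norm (grad (\<lambda>y. u y t) x)) * (exp ((C\<^sub>1 + K\<^sub>3) * t) - 1) \<and>
        norm (grad (\<lambda>y. u y t) x - \<eta> 0)
          \<le> (C\<^sub>1 * \<beta> / (C\<^sub>1 + K\<^sub>3) + norm (\<eta> 0)) * (exp ((C\<^sub>1 + K\<^sub>3) * t) - 1) \<and>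
        norm (\<eta> 0) * exp (- (C\<^sub>1 + K\<^sub>3) * t) - C\<^sub>1 * \<beta> / (C\<^sub>1 + K\<^sub>3) * (1 - exp (- (C\<^sub>1 + K\<^sub>3) * t))
          \<le> norm (grad (\<lambda>y. u y t) x) \<and>
        norm (grad (\<lambda>y. u y t) x)
          \<le> norm (\<eta> 0) * exp ((C\<^sub>1 + K\<^sub>3) * t) + C\<^sub>1 * \<beta> / (C\<^sub>1 + K\<^sub>3) * (exp ((C\<^sub>1 + K\<^sub>3) * t) - 1)) \<and>
     (K\<^sub>3 = 0 \<longrightarrow>
        norm (\<eta> 0) * exp (- C\<^sub>1 * t) - \<beta> * (1 - exp (- C\<^sub>1 * t)) \<le> norm (grad (\<lambda>y. u y t) x) \<and>
        norm (grad (\<lambda>y. u y t) x) \<le> norm (\<eta> 0) * exp (C\<^sub>1 * t) + \<beta> * (exp (C\<^sub>1 * t) - 1)) \<and>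
     (\<beta> = 0 \<longrightarrow>
        norm (\<eta> 0) * exp (- (C\<^sub>1 + K\<^sub>3) * t) \<le> norm (grad (\<lambda>y. u y t) x) \<and>
        norm (grad (\<lambda>y. u y t) x) \<le> norm (\<eta> 0) * exp ((C\<^sub>1 + K\<^sub>3) * t)) \<and>
     (C\<^sub>1 = 0 \<longrightarrow>
        norm (\<eta> 0) * exp (- K\<^sub>3 * t) \<le> norm (grad (\<lambda>y. u y t) x) \<and>
        norm (grad (\<lambda>y. u y t) x) \<le> norm (\<eta> 0) * exp (K\<^sub>3 * t)) \<and>
     ((C\<^sub>1, K\<^sub>3) = (0, 0) \<longrightarrow> grad (\<lambda>y. u y t) x = \<eta> 0)"
proof -
  define g where "g = grad (\<lambda>y. u y t) x"
  define a where "a = C\<^sub>1 + K\<^sub>3"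
  define b where "b = C\<^sub>1 * \<beta>"
  define c where "c = C\<^sub>1 * \<beta> / (C\<^sub>1 + K\<^sub>3)"
  have a0: "a \<ge> 0" using H1(1) H3(1) by (simp add: a_def)
  have b0: "b \<ge> 0" using H1(1,2) by (auto simp: b_def)
  have c0: "c \<ge> 0" using H1(1,2) H3(1) by (auto simp: c_def)
  have ac: "a * c = b"
  proof (cases "a = 0")
    case True
    then have "C\<^sub>1 = 0" using H1(1) H3(1) by (simp add: a_def)
    then show ?thesis using True by (simp add: b_def)
  next
    case False
    then show ?thesis by (simp add: a_def b_def c_def)
  qed
  have t0: "0 \<le> t" "t \<le> T" using t_in by auto
  have tt: "t \<in> {0..t}" using t0 by auto
  have deta: "(\<eta> has_vector_derivative
            (- DxH H (\<xi> s) s (u\<xi> s) (\<eta> s) - DuH H (\<xi> s) s (u\<xi> s) (\<eta> s) *\<^sub>R \<eta> s)) (at s within {0..t})"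
    if "s \<in> {0..t}" for s using lie that unfolding lie_solution_def by blast
  have bnd: "norm (- DxH H (\<xi> s) s (u\<xi> s) (\<eta> s) - DuH H (\<xi> s) s (u\<xi> s) (\<eta> s) *\<^sub>R \<eta> s)
      \<le> b + a * norm (\<eta> s)" if "s \<in> {0..t}" for s
  proof -
    have sT: "s \<in> {0..T}" using that t0 by auto
    have "norm (- DxH H (\<xi> s) s (u\<xi> s) (\<eta> s) - DuH H (\<xi> s) s (u\<xi> s) (\<eta> s) *\<^sub>R \<eta> s)
        \<le> norm (DxH H (\<xi> s) s (u\<xi> s) (\<eta> s)) + \<bar>DuH H (\<xi> s) s (u\<xi> s) (\<eta> s)\<bar> * norm (\<eta> s)"
      by (metis norm_minus_cancel norm_scaleR norm_triangle_ineq4)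
    also have "\<dots> \<le> C\<^sub>1 * (\<beta> + norm (\<eta> s)) + K\<^sub>3 * norm (\<eta> s)"
      using partial_bounds[OF H5 H1(3) H3(2) sT, of "\<xi> s" "u\<xi> s" "\<eta> s"]
      by (intro add_mono mult_right_mono) auto
    also have "\<dots> = b + a * norm (\<eta> s)" by (simp add: a_def b_def algebra_simps)
    finally show ?thesis .
  qed
  define E where "E s = - DxH H (\<xi> s) s (u\<xi> s) (\<eta> s) - DuH H (\<xi> s) s (u\<xi> s) (\<eta> s) *\<^sub>R \<eta> s" for s
  note deta' = deta[folded E_def] and bnd' = bnd[folded E_def]
  have gt: "\<eta> t = g" using term_eta g_def by simp
  have i: "exp (- a * t) * (c + norm (\<eta> t)) \<le> c + norm (\<eta> 0)"
          "c + norm (\<eta> 0) \<le> exp (a * t) * (c + norm (\<eta> t))"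
    using gronwall_aux[OF a0 c0 tt, of \<eta> E] deta' bnd' ac
    by (auto simp: algebra_simps)
  have ii: "exp (- a * t) * ((c + norm (\<eta> 0)) + norm (\<eta> t - \<eta> 0)) \<le> (c + norm (\<eta> 0)) + norm (\<eta> 0 - \<eta> 0)"
  proof (rule gronwall_aux(1)[OF a0 _ tt, of "c + norm (\<eta> 0)" "\<lambda>r. \<eta> r - \<eta> 0" E])
    show "0 \<le> c + norm (\<eta> 0)" using c0 by simp
    show "((\<lambda>r. \<eta> r - \<eta> 0) has_vector_derivative E r) (at r within {0..t})" if "r \<in> {0..t}" for r
      using deta'[OF that] by (auto intro!: derivative_eq_intros)
    show "norm (E r) \<le> a * (c + norm (\<eta> 0) + norm (\<eta> r - \<eta> 0))" if "r \<in> {0..t}" for r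
    proof -
      have "norm (\<eta> r) \<le> norm (\<eta> 0) + norm (\<eta> r - \<eta> 0)" by (metis norm_triangle_sub)
      then have "a * norm (\<eta> r) \<le> a * (norm (\<eta> 0) + norm (\<eta> r - \<eta> 0))" using a0 by (rule mult_left_mono)
      then show ?thesis using bnd'[OF that] ac by (simp add: algebra_simps)
    qed
  qed
  have iii: "(c + norm (\<eta> t)) + norm (\<eta> 0 - \<eta> t) \<le> exp (a * t) * ((c + norm (\<eta> t)) + norm (\<eta> t - \<eta> t))"
  proof (rule gronwall_aux(2)[OF a0 _ tt, of "c + norm (\<eta> t)" "\<lambda>r. \<eta> r - \<eta> t" E])
    show "0 \<le> c + norm (\<eta> t)" using c0 by simp
    show "((\<lambda>r. \<eta> r - \<eta> t) has_vector_derivative E r) (at r within {0..t})" if "r \<in> {0..t}" for r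
      using deta'[OF that] by (auto intro!: derivative_eq_intros)
    show "norm (E r) \<le> a * (c + norm (\<eta> t) + norm (\<eta> r - \<eta> t))" if "r \<in> {0..t}" for r
    proof -
      have "norm (\<eta> r) \<le> norm (\<eta> t) + norm (\<eta> r - \<eta> t)" by (metis norm_triangle_sub)
      then have "a * norm (\<eta> r) \<le> a * (norm (\<eta> t) + norm (\<eta> r - \<eta> t))" using a0 by (rule mult_left_mono)
      then show ?thesis using bnd'[OF that] ac by (simp add: algebra_simps)
    qed
  qed
  have ee: "exp (- a * t) * exp (a * t) = 1" by (simp add: exp_add[symmetric])
  have ee2: "exp (a * t) * exp (- a * t) = 1" by (simp add: exp_add[symmetric])
  have epos: "exp (a * t) > 0" "exp (- a * t) > 0" by auto
  have up: "norm g \<le> norm (\<eta> 0) * exp (a * t) + c * (exp (a * t) - 1)"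
  proof -
    have "exp (a * t) * (exp (- a * t) * (c + norm g)) \<le> exp (a * t) * (c + norm (\<eta> 0))"
      using i(1) gt epos by (intro mult_left_mono) auto
    then have "c + norm g \<le> exp (a * t) * (c + norm (\<eta> 0))"
      by (simp only: mult.assoc[symmetric] ee2 mult_1_left)
    then show ?thesis by (simp add: algebra_simps)
  qed
  have lo: "norm (\<eta> 0) * exp (- a * t) - c * (1 - exp (- a * t)) \<le> norm g"
  proof -
    have "exp (- a * t) * (c + norm (\<eta> 0)) \<le> exp (- a * t) * (exp (a * t) * (c + norm g))"
      using i(2) gt epos by (intro mult_left_mono) auto
    then have "exp (- a * t) * (c + norm (\<eta> 0)) \<le> c + norm g"
      by (simp only: mult.assoc[symmetric] ee mult_1_left)
    then show ?thesis by (simp add: algebra_simps)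
  qed
  have d2: "norm (g - \<eta> 0) \<le> (c + norm (\<eta> 0)) * (exp (a * t) - 1)"
  proof -
    have "exp (a * t) * (exp (- a * t) * (c + norm (\<eta> 0) + norm (g - \<eta> 0))) \<le> exp (a * t) * (c + norm (\<eta> 0))"
      using ii gt epos by (intro mult_left_mono) auto
    then have "c + norm (\<eta> 0) + norm (g - \<eta> 0) \<le> exp (a * t) * (c + norm (\<eta> 0))"
      by (simp only: mult.assoc[symmetric] ee2 mult_1_left)
    then show ?thesis by (simp add: algebra_simps)
  qed
  have d1: "norm (g - \<eta> 0) \<le> (c + norm g) * (exp (a * t) - 1)"
    using iii gt by (simp add: algebra_simps norm_minus_commute)
  have zz: "g = \<eta> 0" if "a = 0"
    using d2 that by simp
  have P1: "(C\<^sub>1, K\<^sub>3) \<noteq> (0, 0) \<longrightarrow>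
        norm (g - \<eta> 0) \<le> (C\<^sub>1 * \<beta> / (C\<^sub>1 + K\<^sub>3) + norm g) * (exp ((C\<^sub>1 + K\<^sub>3) * t) - 1) \<and>
        norm (g - \<eta> 0) \<le> (C\<^sub>1 * \<beta> / (C\<^sub>1 + K\<^sub>3) + norm (\<eta> 0)) * (exp ((C\<^sub>1 + K\<^sub>3) * t) - 1) \<and>
        norm (\<eta> 0) * exp (- (C\<^sub>1 + K\<^sub>3) * t) - C\<^sub>1 * \<beta> / (C\<^sub>1 + K\<^sub>3) * (1 - exp (- (C\<^sub>1 + K\<^sub>3) * t)) \<le> norm g \<and>
        norm g \<le> norm (\<eta> 0) * exp ((C\<^sub>1 + K\<^sub>3) * t) + C\<^sub>1 * \<beta> / (C\<^sub>1 + K\<^sub>3) * (exp ((C\<^sub>1 + K\<^sub>3) * t) - 1)"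
    using d1 d2 lo up by (simp add: a_def c_def)
  have P2: "K\<^sub>3 = 0 \<longrightarrow> norm (\<eta> 0) * exp (- C\<^sub>1 * t) - \<beta> * (1 - exp (- C\<^sub>1 * t)) \<le> norm g \<and>
        norm g \<le> norm (\<eta> 0) * exp (C\<^sub>1 * t) + \<beta> * (exp (C\<^sub>1 * t) - 1)"
  proof
    assume K: "K\<^sub>3 = 0"
    show "norm (\<eta> 0) * exp (- C\<^sub>1 * t) - \<beta> * (1 - exp (- C\<^sub>1 * t)) \<le> norm g \<and>
        norm g \<le> norm (\<eta> 0) * exp (C\<^sub>1 * t) + \<beta> * (exp (C\<^sub>1 * t) - 1)"
    proof (cases "C\<^sub>1 = 0")
      case True
      then have "g = \<eta> 0" using zz K by (simp add: a_def)
      then show ?thesis using True by simp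
    next
      case False
      then have "c = \<beta>" using K by (simp add: c_def)
      then show ?thesis using lo up K by (simp add: a_def)
    qed
  qed
  have P3: "\<beta> = 0 \<longrightarrow> norm (\<eta> 0) * exp (- (C\<^sub>1 + K\<^sub>3) * t) \<le> norm g \<and> norm g \<le> norm (\<eta> 0) * exp ((C\<^sub>1 + K\<^sub>3) * t)"
  proof
    assume "\<beta> = 0"
    then have "c = 0" by (simp add: c_def)
    then show "norm (\<eta> 0) * exp (- (C\<^sub>1 + K\<^sub>3) * t) \<le> norm g \<and> norm g \<le> norm (\<eta> 0) * exp ((C\<^sub>1 + K\<^sub>3) * t)"
      using lo up by (simp add: a_def)
  qed
  have P4: "C\<^sub>1 = 0 \<longrightarrow> norm (\<eta> 0) * exp (- K\<^sub>3 * t) \<le> norm g \<and> norm g \<le> norm (\<eta> 0) * exp (K\<^sub>3 * t)"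
  proof
    assume C: "C\<^sub>1 = 0"
    then have "c = 0" by (simp add: c_def)
    then show "norm (\<eta> 0) * exp (- K\<^sub>3 * t) \<le> norm g \<and> norm g \<le> norm (\<eta> 0) * exp (K\<^sub>3 * t)"
      using lo up C by (simp add: a_def)
  qed
  have P5: "(C\<^sub>1, K\<^sub>3) = (0, 0) \<longrightarrow> g = \<eta> 0" using zz by (simp add: a_def)
  show ?thesis
    unfolding g_def[symmetric] using P1 P2 P3 P4 P5 by blast
qed

end
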